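(* Let $m\leq n$ be positive integers ($n$ finite). Then $\gamma_{gr}^{L,2}(P_m\Box P_n)=mn$.
   Context: $P_m$ is the path on $m$ vertices and $G\Box H$ is the Cartesian product: vertex set $V(G)\times V(H)$, with $(u,v)\sim(x,y)$ iff ($u=x$ and $vy\in E(H)$) or ($v=y$ and $ux\in E(G)$). For a vertex $v$, $N(v)$ is its open neighborhood and $N[v]=N(v)\cup\{v\}$. A sequence $S=(v_1,\ldots,v_r)$ of distinct vertices is a $2$-$L$-sequence if for each $i$ there is $u_i\in N[v_i]$ such that the number of indices $j<i$ with $u_i\in N(v_j)$ is less than $2$. $\gamma_{gr}^{L,2}(G)$ is the maximum length of a $2$-$L$-sequence of $G$. *)

theory Defs
  imports Main
begin

definition open_nbhd :: "'a set \<Rightarrow> ('a \<Rightarrow> 'a \<Rightarrow> bool) \<Rightarrow> 'a \<Rightarrow> 'a set" where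
  "open_nbhd V adj v = {u \<in> V. adj v u}"

definition closed_nbhd :: "'a set \<Rightarrow> ('a \<Rightarrow> 'a \<Rightarrow> bool) \<Rightarrow> 'a \<Rightarrow> 'a set" where
  "closed_nbhd V adj v = insert v (open_nbhd V adj v)"

definition is_kL_sequence :: "nat \<Rightarrow> 'a set \<Rightarrow> ('a \<Rightarrow> 'a \<Rightarrow> bool) \<Rightarrow> 'a list \<Rightarrow> bool" where
  "is_kL_sequence k V adj S \<longleftrightarrow> distinct S \<and> set S \<subseteq> V \<and>
     (\<forall>i < length S. \<exists>u \<in> closed_nbhd V adj (S ! i).
        card {j. j < i \<and> u \<in> open_nbhd V adj (S ! j)} < k)"

definition gamma_grL :: "nat \<Rightarrow> 'a set \<Rightarrow> ('a \<Rightarrow> 'a \<Rightarrow> bool) \<Rightarrow> nat" where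
  "gamma_grL k V adj = Max {length S | S. is_kL_sequence k V adj S}"

text \<open>Path P_m on vertices {0..<m}: i ~ j iff |i - j| = 1.\<close>
definition path_adj :: "nat \<Rightarrow> nat \<Rightarrow> bool" where
  "path_adj i j \<longleftrightarrow> i = Suc j \<or> j = Suc i"

definition cart_prod_adj :: "('a \<Rightarrow> 'a \<Rightarrow> bool) \<Rightarrow> ('b \<Rightarrow> 'b \<Rightarrow> bool) \<Rightarrow> 'a \<times> 'b \<Rightarrow> 'a \<times> 'b \<Rightarrow> bool" where
  "cart_prod_adj adjG adjH p q \<longleftrightarrow>
     (fst p = fst q \<and> adjH (snd p) (snd q)) \<or> (snd p = snd q \<and> adjG (fst p) (fst q))"

end

theory Submission
  imports Defs
begin

lemma card_prefix_eq:
  assumes "distinct S"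
  shows "card {j. j < length S \<and> P (S ! j)} = card {w \<in> set S. P w}"
proof -
  have "(\<lambda>j. S ! j) ` {j. j < length S \<and> P (S ! j)} = {w \<in> set S. P w}"
    by (auto simp: in_set_conv_nth)
  moreover have "inj_on (\<lambda>j. S ! j) {j. j < length S \<and> P (S ! j)}"
    using assms by (auto simp: inj_on_def nth_eq_iff_index_eq)
  ultimately show ?thesis by (metis card_image)
qed

lemma step:
  assumes S: "is_kL_sequence 2 V adj S" and v: "v \<in> V" "v \<notin> set S"
    and u: "u \<in> closed_nbhd V adj v"
    and sub: "{w \<in> set S. u \<in> open_nbhd V adj w} \<subseteq> {z}"
  shows "is_kL_sequence 2 V adj (S @ [v])"
proof -
  have d: "distinct S" "set S \<subseteq> V" using S by (auto simp: is_kL_sequence_def)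
  have c: "card {w \<in> set S. u \<in> open_nbhd V adj w} \<le> 1"
    using card_mono[OF _ sub] by simp
  have last: "card {j. j < length S \<and> u \<in> open_nbhd V adj ((S@[v]) ! j)} < 2"
  proof -
    have "{j. j < length S \<and> u \<in> open_nbhd V adj ((S@[v]) ! j)} = {j. j < length S \<and> u \<in> open_nbhd V adj (S ! j)}"
      by (auto simp: nth_append)
    then show ?thesis using card_prefix_eq[OF d(1), of "\<lambda>w. u \<in> open_nbhd V adj w"] c by simp
  qed
  show ?thesis unfolding is_kL_sequence_def
  proof (intro conjI allI impI)
    show "distinct (S @ [v])" using d v by simp
    show "set (S @ [v]) \<subseteq> V" using d v by simp
    fix i assume i: "i < length (S @ [v])"
    show "\<exists>u\<in>closed_nbhd V adj ((S @ [v]) ! i). card {j. j < i \<and> u \<in> open_nbhd V adj ((S @ [v]) ! j)} < 2"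
    proof (cases "i < length S")
      case True
      then obtain u' where u1: "u' \<in> closed_nbhd V adj (S ! i)"
        and u2: "card {j. j < i \<and> u' \<in> open_nbhd V adj (S ! j)} < 2"
        using S by (auto simp: is_kL_sequence_def)
      have eq: "{j. j < i \<and> u' \<in> open_nbhd V adj ((S@[v]) ! j)} = {j. j < i \<and> u' \<in> open_nbhd V adj (S ! j)}"
        using True by (auto simp: nth_append)
      have e: "(S@[v])!i = S!i" using True by (simp add: nth_append)
      show ?thesis unfolding e by (rule bexI[of _ u']) (use u1 u2 eq in simp_all)
    next
      case False
      then have "i = length S" using i by simp
      then show ?thesis using last u by auto
    qed
  qed
qed

theorem mainTheorem14:
  fixes m n :: nat
  assumes "1 \<le> m" and "m \<le> n"
  shows "gamma_grL 2 ({0..<m} \<times> {0..<n}) (cart_prod_adj path_adj path_adj) = m * n"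
proof -
  define V where "V = {0..<m} \<times> {0..<n}"
  define adj where "adj = cart_prod_adj path_adj path_adj"
  define good where "good S = is_kL_sequence 2 V adj S" for S
  have adjI: "adj p q \<longleftrightarrow> (fst p = fst q \<and> (snd p = Suc (snd q) \<or> snd q = Suc (snd p))) \<or>
      (snd p = snd q \<and> (fst p = Suc (fst q) \<or> fst q = Suc (fst p)))" for p q
    by (auto simp: adj_def cart_prod_adj_def path_adj_def)
  have on: "u \<in> open_nbhd V adj w \<longleftrightarrow> u \<in> V \<and> adj w u" for u w
    by (simp add: open_nbhd_def)
  have cn: "u \<in> closed_nbhd V adj v \<longleftrightarrow> u = v \<or> (u \<in> V \<and> adj v u)" for u v
    by (simp add: closed_nbhd_def open_nbhd_def)
  have stepG: "good (S @ [v])" if "good S" "v \<in> V" "v \<notin> set S" "u = v \<or> (u \<in> V \<and> adj v u)"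
     "\<And>w. w \<in> set S \<Longrightarrow> u \<in> V \<Longrightarrow> adj w u \<Longrightarrow> w = z" for S v u z
    using step[of V adj S v u z] that unfolding good_def cn on by blast
  define L where "L = m - 1"
  have Lm: "L < m" "Suc L = m" using assms L_def by auto
  have ph1: "\<exists>S. good S \<and> set S = {p \<in> V. fst p < a}" if "a \<le> L" for a
    using that
  proof (induction a)
    case 0
    have "good []" by (simp add: good_def is_kL_sequence_def)
    then show ?case by (intro exI[of _ "[]"]) auto
  next
    case (Suc a)
    have inner: "\<exists>S. good S \<and> set S = {p \<in> V. fst p < a \<or> (fst p = a \<and> snd p < b)}" if "b \<le> n" for b
      using that
    proof (induction b)
      case 0
      then show ?case using Suc by auto
    next
      case (Suc b)
      then obtain S where S: "good S" "set S = {p \<in> V. fst p < a \<or> (fst p = a \<and> snd p < b)}" by auto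
      have "good (S @ [(a,b)])"
      proof (rule stepG[OF S(1), where u = "(Suc a, b)" and z = "(a,b)"])
        show "(a,b) \<in> V" using Suc.prems Suc.prems Lm \<open>Suc a \<le> L\<close> by (auto simp: V_def)
        show "(a,b) \<notin> set S" using S by auto
        show "(Suc a, b) = (a, b) \<or> (Suc a, b) \<in> V \<and> adj (a, b) (Suc a, b)"
          using Suc.prems Lm \<open>Suc a \<le> L\<close> by (simp add: V_def adjI)
        fix w assume w1: "w \<in> set S" and w2: "adj w (Suc a, b)"
        have "fst w < a \<or> (fst w = a \<and> snd w < b)" using S(2) w1 by auto
        then show "w = (a,b)" using w2 unfolding adjI prod_eq_iff by auto
      qed
      moreover have "set (S @ [(a,b)]) = {p \<in> V. fst p < a \<or> (fst p = a \<and> snd p < Suc b)}"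
      proof -
        have am: "a < m" using Lm \<open>Suc a \<le> L\<close> by simp
        have bn: "b < n" using Suc.prems by simp
        show ?thesis unfolding set_append S(2) using am bn by (auto simp: V_def less_Suc_eq)
      qed
      ultimately show ?case by blast
    qed
    from inner[of n] obtain S where "good S" "set S = {p \<in> V. fst p < a \<or> (fst p = a \<and> snd p < n)}" by auto
    moreover have "{p \<in> V. fst p < a \<or> (fst p = a \<and> snd p < n)} = {p \<in> V. fst p < Suc a}"
      by (auto simp: V_def)
    ultimately show ?case by auto
  qed
  define R where "R = {p \<in> V. fst p < L}"
  have ph2: "\<exists>S. good S \<and> set S = R \<union> {(L,y) | y. 2 \<le> y \<and> y < n}"
  proof (cases "2 \<le> n")
    case False
    then show ?thesis using ph1[of L] R_def by auto
  next
    case True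
    have "\<exists>S. good S \<and> set S = R \<union> {(L,y) | y. c \<le> y \<and> y < n}" if "2 \<le> c" "c \<le> n" for c
      using that(2,1)
    proof (induction c rule: inc_induct)
      case base
      have "{(L,y) | y. n \<le> y \<and> y < n} = {}" by auto
      then show ?case using ph1[of L] R_def by auto
    next
      case (step c)
      then obtain S where S: "good S" "set S = R \<union> {(L,y) | y. Suc c \<le> y \<and> y < n}" by auto
      have "good (S @ [(L,c)])"
      proof (rule stepG[OF S(1), where u = "(L, c - 1)" and z = "(L - 1, c - 1)"])
        show "(L,c) \<in> V" using step Lm by (auto simp: V_def)
        show "(L,c) \<notin> set S" using S R_def by auto
        show "(L, c - 1) = (L, c) \<or> (L, c - 1) \<in> V \<and> adj (L, c) (L, c - 1)"
          using step Lm by (auto simp: V_def adjI)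
        fix w assume w1: "w \<in> set S" and w2: "adj w (L, c - 1)"
        have "fst w < L \<or> (fst w = L \<and> Suc c \<le> snd w)" using S(2) w1 unfolding R_def by auto
        then show "w = (L - 1, c - 1)" using w2 step(1) \<open>2 \<le> c\<close> unfolding adjI prod_eq_iff by auto
      qed
      moreover have "set (S @ [(L,c)]) = R \<union> {(L,y) | y. c \<le> y \<and> y < n}"
        unfolding set_append S(2) using step(2) by auto
      ultimately show ?case by blast
    qed
    then show ?thesis using True by auto
  qed
  then obtain S where S: "good S" "set S = R \<union> {(L,y) | y. 2 \<le> y \<and> y < n}" by auto
  have n1: "1 \<le> n" using assms by simp
  have S1: "good (S @ [(L,0)])"
  proof (rule stepG[OF S(1), where u = "(L, 0)" and z = "(L - 1, 0)"])
    show "(L,0) \<in> V" using n1 Lm by (auto simp: V_def)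
    show "(L,0) \<notin> set S" using S R_def by auto
    show "(L, 0) = (L, 0) \<or> (L, 0) \<in> V \<and> adj (L, 0) (L, 0)" by simp
    fix w assume w1: "w \<in> set S" and w2: "adj w (L, 0)"
    have "fst w < L \<or> (fst w = L \<and> 2 \<le> snd w)" using S(2) w1 unfolding R_def by auto
    then show "w = (L - 1, 0)" using w2 unfolding adjI prod_eq_iff by auto
  qed
  have full: "\<exists>S. good S \<and> set S = V"
  proof (cases "2 \<le> n")
    case False
    then have "n = 1" using n1 by simp
    then have "set (S @ [(L,0)]) = V" unfolding set_append S(2) R_def V_def Lm(2)[symmetric]
      by (auto simp: less_Suc_eq)
    then show ?thesis using S1 by blast
  next
    case True
    have "good ((S @ [(L,0)]) @ [(L,1)])"
    proof (rule stepG[OF S1, where u = "(L, 0)" and z = "(L - 1, 0)"])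
      show "(L,1) \<in> V" using True Lm by (auto simp: V_def)
      show "(L,1) \<notin> set (S @ [(L,0)])" using S R_def by auto
      show "(L, 0) = (L, 1) \<or> (L, 0) \<in> V \<and> adj (L, 1) (L, 0)" using Lm True by (auto simp: V_def adjI)
      fix w assume w1: "w \<in> set (S @ [(L,0)])" and w2: "adj w (L, 0)"
      have "fst w < L \<or> (fst w = L \<and> 2 \<le> snd w) \<or> w = (L,0)" using S(2) w1 unfolding R_def by auto
      then show "w = (L - 1, 0)" using w2 unfolding adjI prod_eq_iff by auto
    qed
    moreover have "set ((S @ [(L,0)]) @ [(L,1)]) = V"
      unfolding set_append S(2) R_def V_def Lm(2)[symmetric] using True
      by (auto simp: less_Suc_eq)
    ultimately show ?thesis by blast
  qed
  then obtain T where T: "good T" "set T = V" by auto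
  have lenT: "length T = m * n"
    using T distinct_card[of T] by (simp add: good_def is_kL_sequence_def V_def)
  have bound: "length S' \<le> m * n" if "good S'" for S'
  proof -
    have "distinct S'" "set S' \<subseteq> V" using that by (auto simp: good_def is_kL_sequence_def)
    then have "card (set S') \<le> card V" by (intro card_mono) (auto simp: V_def)
    then show ?thesis using \<open>distinct S'\<close> distinct_card[of S'] by (simp add: V_def)
  qed
  have "Max {length S | S. good S} = m * n"
  proof (rule Max_eqI)
    show "finite {length S | S. good S}"
      by (rule finite_subset[of _ "{..m*n}"]) (use bound in auto)
    show "y \<le> m * n" if "y \<in> {length S | S. good S}" for y using that bound by auto
    show "m * n \<in> {length S | S. good S}" using T(1) lenT by (metis (mono_tags, lifting) mem_Collect_eq)
  qed
  then show ?thesis by (simp add: gamma_grL_def good_def V_def adj_def)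
qed

end
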